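(* There exist a constant $c>0$ and infinitely many $n\in\mathbb{N}$ such that for each of them there is a connected graph $G$ on $n$ vertices and vertices $a,b\in V(G)$ such that, in the geodesic-biased random walk on $G$ with target $b$ and excited set $\mathcal{X}=\{a\}$, started at $a$ (for any choice of the fixed shortest paths), \[\mathbb{E}[\tau_a(b,\{a\})]\ \ge\ c\,\exp\left(\frac{\sqrt[4]{n}\,\log n}{100}\right).\]
   Context: Geodesic-biased random walk: let $G$ be a finite connected graph, $b\in V(G)$ a target vertex and $\mathcal{X}\subseteq V(G)$ a set of excited vertices. For every vertex $x\neq b$ fix in advance one shortest path (geodesic) in $G$ from $x$ to $b$. A walker moves in discrete time: from an unexcited vertex ($x\notin\mathcal{X}$) she moves to a uniformly random neighbour of $x$; from an excited vertex ($x\in\mathcal{X}$) she moves deterministically to the next vertex on the fixed shortest path from $x$ to $b$. $\tau_a(b,\mathcal{X})$ denotes the first time the walker started at $a$ visits $b$. *)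

theory Defs
  imports "HOL-Probability.Probability"
begin

definition graph :: "'a set \<Rightarrow> ('a \<Rightarrow> 'a \<Rightarrow> bool) \<Rightarrow> bool" where
  "graph V E \<longleftrightarrow> finite V \<and> (\<forall>x y. E x y \<longrightarrow> x \<in> V \<and> y \<in> V)
     \<and> (\<forall>x y. E x y \<longrightarrow> E y x) \<and> (\<forall>x. \<not> E x x)"

definition connected_graph :: "'a set \<Rightarrow> ('a \<Rightarrow> 'a \<Rightarrow> bool) \<Rightarrow> bool" where
  "connected_graph V E \<longleftrightarrow> V \<noteq> {} \<and> (\<forall>x\<in>V. \<forall>y\<in>V. E\<^sup>*\<^sup>* x y)"

definition gdist :: "('a \<Rightarrow> 'a \<Rightarrow> bool) \<Rightarrow> 'a \<Rightarrow> 'a \<Rightarrow> nat" where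
  "gdist E x y = (LEAST k. (E ^^ k) x y)"

text \<open>A choice of fixed shortest paths to b, recorded by the next vertex on the
  chosen geodesic from each x \<noteq> b (only this first step is used by the walk).\<close>
definition geodesic_choice :: "'a set \<Rightarrow> ('a \<Rightarrow> 'a \<Rightarrow> bool) \<Rightarrow> 'a \<Rightarrow> ('a \<Rightarrow> 'a) \<Rightarrow> bool" where
  "geodesic_choice V E b nx \<longleftrightarrow>
     (\<forall>x\<in>V - {b}. E x (nx x) \<and> gdist E (nx x) b + 1 = gdist E x b)"

definition gb_step :: "('a \<Rightarrow> 'a \<Rightarrow> bool) \<Rightarrow> 'a \<Rightarrow> 'a set \<Rightarrow> ('a \<Rightarrow> 'a) \<Rightarrow> 'a \<Rightarrow> 'a pmf" where
  "gb_step E b X nx x =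
     (if x = b then return_pmf b
      else if x \<in> X then return_pmf (nx x)
      else pmf_of_set {y. E x y})"

fun gb_walk :: "('a \<Rightarrow> 'a \<Rightarrow> bool) \<Rightarrow> 'a \<Rightarrow> 'a set \<Rightarrow> ('a \<Rightarrow> 'a) \<Rightarrow> 'a \<Rightarrow> nat \<Rightarrow> 'a pmf" where
  "gb_walk E b X nx a 0 = return_pmf a"
| "gb_walk E b X nx a (Suc k) = bind_pmf (gb_walk E b X nx a k) (gb_step E b X nx)"

text \<open>Expected hitting time E[tau_a(b,X)] via the tail-sum formula
  E[tau] = sum_k P(tau > k); P(tau > k) = P(stopped walk at time k is not b).\<close>
definition expected_hitting_time ::
  "('a \<Rightarrow> 'a \<Rightarrow> bool) \<Rightarrow> 'a \<Rightarrow> 'a set \<Rightarrow> ('a \<Rightarrow> 'a) \<Rightarrow> 'a \<Rightarrow> ennreal" where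
  "expected_hitting_time E b X nx a =
     (\<Sum>k. ennreal (measure_pmf.prob (gb_walk E b X nx a k) {x. x \<noteq> b}))"

end

theory Submission
  imports Defs "HOL-Library.Countable"
begin


lemma walk_support:
  assumes "a \<in> V" "b \<in> V"
    and st: "\<And>x. x \<in> V \<Longrightarrow> set_pmf (gb_step E b X nx x) \<subseteq> V"
  shows "set_pmf (gb_walk E b X nx a k) \<subseteq> V"
  using assms by (induction k) (auto simp: set_bind_pmf)

lemma walk_drift:
  fixes f :: "'a \<Rightarrow> ennreal"
  assumes "a \<in> V" "b \<in> V"
    and st: "\<And>x. x \<in> V \<Longrightarrow> set_pmf (gb_step E b X nx x) \<subseteq> V"
    and dr: "\<And>x. x \<in> V \<Longrightarrow> (\<integral>\<^sup>+y. f y \<partial>measure_pmf (gb_step E b X nx x)) \<le> f x + \<delta>"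
  shows "(\<integral>\<^sup>+y. f y \<partial>measure_pmf (gb_walk E b X nx a k)) \<le> f a + of_nat k * \<delta>"
proof (induction k)
  case 0 then show ?case by simp
next
  case (Suc k)
  have "(\<integral>\<^sup>+y. f y \<partial>measure_pmf (gb_walk E b X nx a (Suc k)))
     = (\<integral>\<^sup>+x. (\<integral>\<^sup>+y. f y \<partial>measure_pmf (gb_step E b X nx x)) \<partial>measure_pmf (gb_walk E b X nx a k))"
    by simp
  also have "\<dots> \<le> (\<integral>\<^sup>+x. f x + \<delta> \<partial>measure_pmf (gb_walk E b X nx a k))"
    apply (rule nn_integral_mono_AE)
    apply (rule AE_pmfI)
    using walk_support[OF assms(1,2) st] dr by blast
  also have "\<dots> = (\<integral>\<^sup>+x. f x \<partial>measure_pmf (gb_walk E b X nx a k)) + \<delta>"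
    by (subst nn_integral_add) (auto simp: measure_pmf.emeasure_space_1)
  also have "\<dots> \<le> f a + of_nat k * \<delta> + \<delta>" using Suc by (simp add: add_right_mono)
  finally show ?case by (simp add: algebra_simps)
qed

lemma walk_notb:
  fixes f :: "'a \<Rightarrow> ennreal"
  assumes "a \<in> V" "b \<in> V"
    and st: "\<And>x. x \<in> V \<Longrightarrow> set_pmf (gb_step E b X nx x) \<subseteq> V"
    and dr: "\<And>x. x \<in> V \<Longrightarrow> (\<integral>\<^sup>+y. f y \<partial>measure_pmf (gb_step E b X nx x)) \<le> f x + \<delta>"
    and fb: "f b \<ge> 1"
  shows "ennreal (measure_pmf.prob (gb_walk E b X nx a k) {x. x \<noteq> b}) \<ge> 1 - (f a + of_nat k * \<delta>)"
proof -
  let ?M = "measure_pmf (gb_walk E b X nx a k)"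
  have "emeasure ?M {b} = (\<integral>\<^sup>+y. indicator {b} y \<partial>?M)" by simp
  also have "\<dots> \<le> (\<integral>\<^sup>+y. f y \<partial>?M)"
    by (rule nn_integral_mono) (use fb in \<open>auto split: split_indicator\<close>)
  also have "\<dots> \<le> f a + of_nat k * \<delta>" by (rule walk_drift[OF assms(1-4)])
  finally have 1: "emeasure ?M {b} \<le> f a + of_nat k * \<delta>" .
  have "emeasure ?M {x. x \<noteq> b} + emeasure ?M {b} = 1"
  proof -
    have "emeasure ?M ({x. x \<noteq> b} \<union> {b}) = emeasure ?M {x. x \<noteq> b} + emeasure ?M {b}"
      by (rule plus_emeasure[symmetric]) auto
    moreover have "{x. x \<noteq> b} \<union> {b} = UNIV" by auto
    ultimately show ?thesis by (simp add: measure_pmf.emeasure_space_1[simplified])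
  qed
  hence "emeasure ?M {x. x \<noteq> b} = 1 - emeasure ?M {b}"
    by (metis ennreal_add_diff_cancel_right measure_pmf.emeasure_finite)
  hence "emeasure ?M {x. x \<noteq> b} \<ge> 1 - (f a + of_nat k * \<delta>)"
    using 1 by (simp add: ennreal_minus_mono)
  thus ?thesis by (simp add: measure_pmf.emeasure_eq_measure)
qed



datatype vtx = P nat | H nat nat nat

definition hp :: "nat \<Rightarrow> nat \<Rightarrow> nat \<Rightarrow> nat \<Rightarrow> vtx" where
  "hp d i j t = (if t = 0 then P i else if t = d then P d else H i j t)"

definition Vv :: "nat \<Rightarrow> vtx set" where
  "Vv d = {P i | i. i \<le> d} \<union> {H i j t | i j t. 1 \<le> i \<and> i < d \<and> j < 2*d \<and> 1 \<le> t \<and> t < d}"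

definition E0 :: "nat \<Rightarrow> vtx \<Rightarrow> vtx \<Rightarrow> bool" where
  "E0 d u v \<longleftrightarrow> (\<exists>i<d. u = P i \<and> v = P (Suc i)) \<or>
     (\<exists>i j. 1 \<le> i \<and> i < d \<and> j < 2*d \<and> 2 \<le> d \<and> u = P i \<and> v = H i j 1) \<or>
     (\<exists>i j t. 1 \<le> i \<and> i < d \<and> j < 2*d \<and> 1 \<le> t \<and> Suc t < d \<and> u = H i j t \<and> v = H i j (Suc t)) \<or>
     (\<exists>i j. 1 \<le> i \<and> i < d \<and> j < 2*d \<and> 2 \<le> d \<and> u = H i j (d-1) \<and> v = P d)"

definition Ev :: "nat \<Rightarrow> vtx \<Rightarrow> vtx \<Rightarrow> bool" where
  "Ev d u v \<longleftrightarrow> E0 d u v \<or> E0 d v u"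

lemma Ev_sym: "Ev d u v \<Longrightarrow> Ev d v u" by (auto simp: Ev_def)

lemma E0_in: "E0 d u v \<Longrightarrow> u \<in> Vv d \<and> v \<in> Vv d"
  unfolding E0_def Vv_def by auto

lemma Ev_in: "Ev d u v \<Longrightarrow> u \<in> Vv d \<and> v \<in> Vv d"
  by (auto simp: Ev_def dest: E0_in)

lemma E0_irrefl: "\<not> E0 d u u"
  by (auto simp: E0_def)

lemma Ev_irrefl: "\<not> Ev d u u" by (simp add: Ev_def E0_irrefl)

lemma finite_Vv: "finite (Vv d)"
proof -
  have "{H i j t | i j t. 1 \<le> i \<and> i < d \<and> j < 2*d \<and> 1 \<le> t \<and> t < d}
        = (\<lambda>(i,j,t). H i j t) ` ({1..<d} \<times> {..<2*d} \<times> {1..<d})" by (auto simp: image_iff)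
  moreover have "{P i | i. i \<le> d} = P ` {..d}" by auto
  ultimately show ?thesis unfolding Vv_def by simp
qed

lemma card_Vv: "card (Vv d) = (d + 1) + (d - 1) * (2*d) * (d - 1)"
proof -
  have h: "{H i j t | i j t. 1 \<le> i \<and> i < d \<and> j < 2*d \<and> 1 \<le> t \<and> t < d}
        = (\<lambda>(i,j,t). H i j t) ` ({1..<d} \<times> {..<2*d} \<times> {1..<d})" by (auto simp: image_iff)
  have p: "{P i | i. i \<le> d} = P ` {..d}" by auto
  have "card (Vv d) = card (P ` {..d}) + card ((\<lambda>(i,j,t). H i j t) ` ({1..<d} \<times> {..<2*d} \<times> {1..<d}))"
    unfolding Vv_def h p by (rule card_Un_disjoint) auto
  also have "\<dots> = (d+1) + card ({1..<d} \<times> {..<2*d} \<times> {1..<d})"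
    by (subst card_image, simp add: inj_on_def, subst card_image, auto simp: inj_on_def)
  also have "\<dots> = (d + 1) + (d - 1) * (2*d) * (d - 1)" by (simp add: card_cartesian_product)
  finally show ?thesis .
qed

lemma N_P:
  assumes "2 \<le> d" "1 \<le> i" "i < d"
  shows "{w. Ev d (P i) w} = insert (P (i-1)) (insert (P (Suc i)) ((\<lambda>j. H i j 1) ` {..<2*d}))"
proof (rule set_eqI, rule iffI)
  fix w assume "w \<in> {w. Ev d (P i) w}"
  then have "E0 d (P i) w \<or> E0 d w (P i)" by (simp add: Ev_def)
  then show "w \<in> insert (P (i-1)) (insert (P (Suc i)) ((\<lambda>j. H i j 1) ` {..<2*d}))"
    using assms unfolding E0_def by auto
next
  fix w assume w: "w \<in> insert (P (i-1)) (insert (P (Suc i)) ((\<lambda>j. H i j 1) ` {..<2*d}))"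
  have 1: "E0 d (P (i-1)) (P i)" unfolding E0_def using assms
    by (intro disjI1 exI[of _ "i-1"]) auto
  have 2: "E0 d (P i) (P (Suc i))" unfolding E0_def using assms by auto
  have 3: "E0 d (P i) (H i j 1)" if "j < 2*d" for j unfolding E0_def using assms that by auto
  show "w \<in> {w. Ev d (P i) w}" using w 1 2 3 by (auto simp: Ev_def)
qed

lemma N_H:
  assumes "H i j t \<in> Vv d"
  shows "{w. Ev d (H i j t) w} = {hp d i j (t-1), hp d i j (Suc t)}"
proof (rule set_eqI, rule iffI)
  fix w assume "w \<in> {w. Ev d (H i j t) w}"
  then have "E0 d (H i j t) w \<or> E0 d w (H i j t)" by (simp add: Ev_def)
  then show "w \<in> {hp d i j (t-1), hp d i j (Suc t)}"
    using assms unfolding E0_def Vv_def hp_def by auto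
next
  fix w assume w: "w \<in> {hp d i j (t-1), hp d i j (Suc t)}"
  from assms have a: "1 \<le> i" "i < d" "j < 2*d" "1 \<le> t" "t < d" by (auto simp: Vv_def)
  have 1: "E0 d (hp d i j (t-1)) (H i j t)"
  proof (cases "t = 1")
    case True thus ?thesis using a unfolding E0_def hp_def by auto
  next
    case False thus ?thesis using a unfolding E0_def hp_def
      by (intro disjI2 disjI2 disjI1 exI[of _ i] exI[of _ j] exI[of _ "t-1"]) auto
  qed
  have 2: "E0 d (H i j t) (hp d i j (Suc t))"
  proof (cases "Suc t = d")
    case True thus ?thesis using a unfolding E0_def hp_def by auto
  next
    case False thus ?thesis using a unfolding E0_def hp_def by auto
  qed
  show "w \<in> {w. Ev d (H i j t) w}" using w 1 2 by (auto simp: Ev_def)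
qed

lemma N_Pd:
  assumes "Ev d (P d) w"
  shows "w = P (d-1) \<or> (\<exists>i j. 1 \<le> i \<and> i < d \<and> w = H i j (d-1))"
  using assms unfolding Ev_def E0_def by auto



instance vtx :: countable by countable_datatype


lemma E_path: "i < d \<Longrightarrow> Ev d (P i) (P (Suc i))"
  unfolding Ev_def E0_def by (rule disjI1, rule disjI1, rule exI[of _ i]) simp
lemma E_entry: "1 \<le> i \<Longrightarrow> i < d \<Longrightarrow> j < 2*d \<Longrightarrow> 2 \<le> d \<Longrightarrow> Ev d (P i) (H i j 1)"
  unfolding Ev_def E0_def by (rule disjI1, rule disjI2, rule disjI1, rule exI[of _ i], rule exI[of _ j]) simp
lemma E_int: "1 \<le> i \<Longrightarrow> i < d \<Longrightarrow> j < 2*d \<Longrightarrow> 1 \<le> t \<Longrightarrow> Suc t < d \<Longrightarrow> Ev d (H i j t) (H i j (Suc t))"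
  unfolding Ev_def E0_def by (rule disjI1, rule disjI2, rule disjI2, rule disjI1, rule exI[of _ i], rule exI[of _ j], rule exI[of _ t]) simp

lemma path_conn: "i \<le> d \<Longrightarrow> (Ev d)\<^sup>*\<^sup>* (P i) (P 0)"
proof (induction i)
  case 0 then show ?case by simp
next
  case (Suc i)
  have "i < d" using Suc.prems by simp
  then have "Ev d (P (Suc i)) (P i)" by (rule Ev_sym[OF E_path])
  moreover have "(Ev d)\<^sup>*\<^sup>* (P i) (P 0)" using Suc by simp
  ultimately show ?case by (rule converse_rtranclp_into_rtranclp)
qed

lemma hw_conn: "1 \<le> i \<Longrightarrow> i < d \<Longrightarrow> j < 2*d \<Longrightarrow> 1 \<le> t \<Longrightarrow> t < d \<Longrightarrow> (Ev d)\<^sup>*\<^sup>* (H i j t) (P i)"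
proof (induction t)
  case 0 then show ?case by simp
next
  case (Suc t)
  show ?case
  proof (cases "t = 0")
    case True
    have "Ev d (P i) (H i j 1)" using Suc.prems by (intro E_entry) auto
    then have "Ev d (H i j 1) (P i)" by (rule Ev_sym)
    then show ?thesis using True by (simp add: r_into_rtranclp)
  next
    case False
    have "Ev d (H i j t) (H i j (Suc t))" using Suc.prems False by (intro E_int) auto
    then have "Ev d (H i j (Suc t)) (H i j t)" by (rule Ev_sym)
    moreover have "(Ev d)\<^sup>*\<^sup>* (H i j t) (P i)" using Suc.IH Suc.prems False by simp
    ultimately show ?thesis by (rule converse_rtranclp_into_rtranclp)
  qed
qed

lemma all_conn: "v \<in> Vv d \<Longrightarrow> (Ev d)\<^sup>*\<^sup>* v (P 0)"
proof -
  assume "v \<in> Vv d"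
  then consider i where "v = P i" "i \<le> d" | i j t where "v = H i j t" "1 \<le> i" "i < d" "j < 2*d" "1 \<le> t" "t < d"
    unfolding Vv_def by blast
  then show ?thesis
  proof cases
    case 1 then show ?thesis using path_conn by simp
  next
    case 2 then show ?thesis using rtranclp_trans[OF hw_conn path_conn] by simp
  qed
qed

lemma sym_rtranclp:
  assumes s: "\<And>x y. R x y \<Longrightarrow> R y x" and r: "R\<^sup>*\<^sup>* x y" shows "R\<^sup>*\<^sup>* y x"
  using r
proof (induction rule: rtranclp_induct)
  case base then show ?case by simp
next
  case (step y z) then show ?case using s by (meson converse_rtranclp_into_rtranclp)
qed

fun phi :: "nat \<Rightarrow> vtx \<Rightarrow> nat" where
  "phi d (P i) = i"
| "phi d (H i j t) = min (i + t) d"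

lemma phi_lip: "Ev d u v \<Longrightarrow> phi d u \<le> phi d v + 1"
  unfolding Ev_def E0_def by (elim disjE exE conjE) auto

definition Vn :: "nat \<Rightarrow> nat set" where "Vn d = to_nat ` Vv d"
definition En :: "nat \<Rightarrow> nat \<Rightarrow> nat \<Rightarrow> bool" where
  "En d u v \<longleftrightarrow> (\<exists>x y. u = to_nat x \<and> v = to_nat y \<and> Ev d x y)"

lemma En_to[simp]: "En d (to_nat x) (to_nat y) = Ev d x y"
  unfolding En_def by (auto dest: injD[OF inj_to_nat])

lemma En_D: "En d u v \<Longrightarrow> u = to_nat (from_nat u :: vtx) \<and> v = to_nat (from_nat v :: vtx) \<and> Ev d (from_nat u) (from_nat v)"
  unfolding En_def by (auto simp: from_nat_to_nat)

lemma N_n: "{y. En d (to_nat x) y} = to_nat ` {w. Ev d x w}"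
  by (auto simp: En_def dest: injD[OF inj_to_nat])

lemma rt_transfer: "(Ev d)\<^sup>*\<^sup>* x y \<Longrightarrow> (En d)\<^sup>*\<^sup>* (to_nat x) (to_nat y)"
  by (induction rule: rtranclp_induct) (auto intro: rtranclp.rtrancl_into_rtrancl)

lemma graph_n: "graph (Vn d) (En d)"
proof -
  have "finite (Vn d)" by (simp add: Vn_def finite_Vv)
  moreover have "\<forall>x y. En d x y \<longrightarrow> x \<in> Vn d \<and> y \<in> Vn d"
    unfolding En_def Vn_def using Ev_in by blast
  moreover have "\<forall>x y. En d x y \<longrightarrow> En d y x"
    unfolding En_def using Ev_sym by blast
  moreover have "\<forall>x. \<not> En d x x"
    unfolding En_def using Ev_irrefl by (metis inj_to_nat injD)
  ultimately show ?thesis unfolding graph_def by blast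
qed

lemma conn_n: "connected_graph (Vn d) (En d)"
proof -
  have "P 0 \<in> Vv d" by (auto simp: Vv_def)
  moreover have "(En d)\<^sup>*\<^sup>* (to_nat x) (to_nat y)" if "x \<in> Vv d" "y \<in> Vv d" for x y
  proof -
    have "(Ev d)\<^sup>*\<^sup>* x (P 0)" using all_conn that(1) .
    moreover have "(Ev d)\<^sup>*\<^sup>* (P 0) y" using all_conn[OF that(2)] Ev_sym sym_rtranclp by metis
    ultimately show ?thesis by (intro rt_transfer) (rule rtranclp_trans)
  qed
  ultimately show ?thesis unfolding connected_graph_def Vn_def by auto
qed

lemma card_n: "card (Vn d) = (d + 1) + (d - 1) * (2*d) * (d - 1)"
  unfolding Vn_def by (simp add: card_image card_Vv)

lemma pow_lip: "((En d) ^^ k) u v \<Longrightarrow> phi d (from_nat u) \<le> phi d (from_nat v) + k"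
proof (induction k arbitrary: v)
  case 0 then show ?case by simp
next
  case (Suc k)
  then obtain z where z: "((En d) ^^ k) u z" "En d z v" by auto
  have "phi d (from_nat z) \<le> phi d (from_nat v) + 1" using En_D[OF z(2)] phi_lip by blast
  then show ?case using Suc.IH[OF z(1)] by simp
qed

lemma gdist_lower:
  assumes "w \<in> Vv d"
  shows "phi d w \<le> gdist (En d) (to_nat w) (to_nat (P 0))"
proof -
  have "P 0 \<in> Vv d" by (auto simp: Vv_def)
  then have "(En d)\<^sup>*\<^sup>* (to_nat w) (to_nat (P 0))"
    using conn_n assms unfolding connected_graph_def Vn_def by auto
  then obtain k where "((En d) ^^ k) (to_nat w) (to_nat (P 0))" by (auto simp: rtranclp_power)
  then have "((En d) ^^ gdist (En d) (to_nat w) (to_nat (P 0))) (to_nat w) (to_nat (P 0))"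
    unfolding gdist_def by (rule LeastI)
  from pow_lip[OF this] show ?thesis by simp
qed

lemma path_pow: "i \<le> d \<Longrightarrow> ((En d) ^^ i) (to_nat (P i)) (to_nat (P 0))"
proof (induction i)
  case 0 then show ?case by simp
next
  case (Suc i)
  have "En d (to_nat (P (Suc i))) (to_nat (P i))" using Suc.prems by (simp add: Ev_sym E_path)
  moreover have "((En d) ^^ i) (to_nat (P i)) (to_nat (P 0))" using Suc by simp
  ultimately show ?case by (rule relpowp_Suc_I2)
qed

lemma gdist_a: "gdist (En d) (to_nat (P d)) (to_nat (P 0)) \<le> d"
  unfolding gdist_def by (rule Least_le) (rule path_pow, simp)

lemma geo_nx:
  assumes "2 \<le> d" "geodesic_choice (Vn d) (En d) (to_nat (P 0)) nx"
  shows "nx (to_nat (P d)) = to_nat (P (d - 1))"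
proof -
  have inV: "to_nat (P d) \<in> Vn d - {to_nat (P 0)}" using assms(1) by (auto simp: Vn_def Vv_def)
  with assms(2) have g: "En d (to_nat (P d)) (nx (to_nat (P d)))"
    "gdist (En d) (nx (to_nat (P d))) (to_nat (P 0)) + 1 = gdist (En d) (to_nat (P d)) (to_nat (P 0))"
    unfolding geodesic_choice_def by blast+
  define w :: vtx where "w = from_nat (nx (to_nat (P d)))"
  from En_D[OF g(1)] have w: "nx (to_nat (P d)) = to_nat w" "Ev d (P d) w" by (auto simp: w_def)
  from N_Pd[OF w(2)] show ?thesis
  proof
    assume "w = P (d-1)" then show ?thesis using w by simp
  next
    assume "\<exists>i j. 1 \<le> i \<and> i < d \<and> w = H i j (d-1)"
    then obtain i j where ij: "1 \<le> i" "i < d" "w = H i j (d-1)" by blast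
    have "phi d w = d" using ij by simp
    moreover have "w \<in> Vv d" using Ev_in[OF w(2)] by simp
    ultimately have "d \<le> gdist (En d) (to_nat w) (to_nat (P 0))" using gdist_lower by metis
    with g(2) gdist_a[of d] w(1) show ?thesis by simp
  qed
qed



fun gg :: "nat \<Rightarrow> vtx \<Rightarrow> real" where
  "gg d (P i) = (if i < d then (1/2)^i else 0)"
| "gg d (H i j t) = (1/2)^i * (1 - real t / real d)"

lemma gg_hp: "i < d \<Longrightarrow> t \<le> d \<Longrightarrow> gg d (hp d i j t) = (1/2)^i * (1 - real t / real d)"
  by (auto simp: hp_def)

lemma gg_nonneg: "v \<in> Vv d \<Longrightarrow> 0 \<le> gg d v"
  by (auto simp: Vv_def)

lemma nn_pmf_set:
  assumes "finite S" "S \<noteq> {}" "\<And>x. x \<in> S \<Longrightarrow> 0 \<le> G x"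
  shows "(\<integral>\<^sup>+x. ennreal (G x) \<partial>measure_pmf (pmf_of_set S)) = ennreal (sum G S / card S)"
proof -
  have "(\<integral>\<^sup>+x. ennreal (G x) \<partial>measure_pmf (pmf_of_set S)) = (\<Sum>x\<in>S. ennreal (G x)) / of_nat (card S)"
    using assms by (simp add: nn_integral_pmf_of_set)
  also have "\<dots> = ennreal (sum G S) / ennreal (real (card S))"
    using assms by (simp add: sum_ennreal ennreal_of_nat_eq_real_of_nat)
  also have "\<dots> = ennreal (sum G S / card S)"
    using assms by (intro divide_ennreal) (auto simp: sum_nonneg card_gt_0_iff)
  finally show ?thesis .
qed

lemma drift_P:
  assumes "2 \<le> d" "1 \<le> i" "i < d"
  shows "sum (gg d) {w. Ev d (P i) w} / card {w. Ev d (P i) w} \<le> gg d (P i)"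
proof -
  obtain k where k: "i = Suc k" using assms by (cases i) auto
  define r :: real where "r = (1/2)^i"
  have r0: "r > 0" by (simp add: r_def)
  have rk: "gg d (P (i-1)) = 2 * r" using assms k by (simp add: r_def)
  have rs: "gg d (P (Suc i)) \<le> r" using r0 by (simp add: r_def)
  have img: "(\<Sum>w\<in>(\<lambda>j. H i j 1) ` {..<2*d}. gg d w) = 2 * d * (r * (1 - 1 / d))"
    by (subst sum.reindex) (auto simp: inj_on_def r_def)
  have N: "{w. Ev d (P i) w} = insert (P (i-1)) (insert (P (Suc i)) ((\<lambda>j. H i j 1) ` {..<2*d}))"
    by (rule N_P[OF assms])
  have s: "sum (gg d) {w. Ev d (P i) w} = 2 * r + gg d (P (Suc i)) + 2 * d * (r * (1 - 1 / d))"
    unfolding N using assms k rk img by (auto simp: image_iff)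
  have c: "card {w. Ev d (P i) w} = 2 * d + 2"
    unfolding N using assms k by (auto simp: image_iff card_image inj_on_def)
  define A where "A = 2 * r + gg d (P (Suc i)) + 2 * d * (r * (1 - 1 / d))"
  have le: "A \<le> (2 * d + 2) * r"
  proof -
    have "2 * d * (r * (1 - 1 / d)) = 2 * d * r - 2 * r" using assms by (simp add: field_simps)
    then show ?thesis using rs r0 unfolding A_def by (simp add: algebra_simps del: gg.simps)
  qed
  have gP: "gg d (P i) = r" using assms by (simp add: r_def)
  have "A / real (2 * d + 2) \<le> r" using le by (simp add: pos_divide_le_eq algebra_simps)
  then show ?thesis unfolding s c gP A_def .
qed

lemma drift_H:
  assumes "H i j t \<in> Vv d"
  shows "sum (gg d) {w. Ev d (H i j t) w} / card {w. Ev d (H i j t) w} \<le> gg d (H i j t)"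
proof -
  from assms have a: "1 \<le> i" "i < d" "j < 2*d" "1 \<le> t" "t < d" by (auto simp: Vv_def)
  have ne: "hp d i j (t-1) \<noteq> hp d i j (Suc t)" using a by (auto simp: hp_def)
  have "sum (gg d) {w. Ev d (H i j t) w} = gg d (hp d i j (t-1)) + gg d (hp d i j (Suc t))"
    unfolding N_H[OF assms] using ne by simp
  also have "\<dots> = (1/2)^i * (1 - real (t-1) / d) + (1/2)^i * (1 - real (Suc t) / d)"
    using a by (simp add: gg_hp)
  also have "\<dots> = 2 * gg d (H i j t)" using a by (simp add: of_nat_diff field_simps)
  finally have "sum (gg d) {w. Ev d (H i j t) w} = 2 * gg d (H i j t)" .
  moreover have "card {w. Ev d (H i j t) w} = 2" unfolding N_H[OF assms] using ne by simp
  ultimately show ?thesis by simp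
qed



definition nf :: "nat \<Rightarrow> nat" where "nf d = (d + 1) + (d - 1) * (2*d) * (d - 1)"

lemma nf_le: "2 \<le> d \<Longrightarrow> nf d \<le> 2 * d^3"
proof -
  assume "2 \<le> d"
  then obtain m where m: "d = Suc (Suc m)" by (metis add_2_eq_Suc le_Suc_ex)
  show ?thesis unfolding nf_def m by (simp add: power3_eq_cube algebra_simps)
qed

lemma asym:
  assumes "2 \<le> d"
  shows "(1/8) * exp (root 4 (real (nf d)) * ln (real (nf d)) / 100) \<le> 2^(d-2)/2"
proof -
  define x where "x = real (nf d)"
  have x1: "1 \<le> x" unfolding x_def nf_def by simp
  have x2: "x \<le> 2 * real d ^ 3" unfolding x_def using nf_le[OF assms]
    by (metis of_nat_le_iff of_nat_mult of_nat_numeral of_nat_power)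
  define u where "u = root 12 x"
  have u0: "0 < u" unfolding u_def using x1 by (intro real_root_gt_zero) auto
  have u12: "u ^ 12 = x" unfolding u_def using x1 by simp
  have r4: "root 4 x = u ^ 3"
  proof -
    have e: "x = (u^3)^4" using u12 by (simp add: power_mult[symmetric])
    show ?thesis unfolding e by (rule real_root_power_cancel) (use u0 in auto)
  qed
  have lx: "ln x = 12 * ln u" using u12 ln_realpow[of u 12] by simp
  have lu: "ln u \<le> u" using ln_le_minus_one[OF u0] by simp
  have "root 4 x * ln x \<le> 12 * u^4"
  proof -
    have "root 4 x * ln x = 12 * (u^3 * ln u)" using r4 lx by simp
    also have "\<dots> \<le> 12 * (u^3 * u)" using lu u0 by (intro mult_left_mono) auto
    also have "\<dots> = 12 * u^4" by (simp add: eval_nat_numeral)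
    finally show ?thesis .
  qed
  moreover have "u^4 \<le> 2 * real d"
  proof (rule power_le_imp_le_base[where n=2])
    have "(u^4)^Suc 2 = x" using u12 by (simp add: power_mult[symmetric])
    also have "\<dots> \<le> (2 * real d)^Suc 2"
    proof -
      have "0 \<le> real d ^ 3" by simp
      moreover have "(2 * real d)^Suc 2 = 8 * real d ^ 3" by (simp add: power_mult_distrib)
      ultimately show ?thesis using x2 by linarith
    qed
    finally show "(u^4)^Suc 2 \<le> (2 * real d)^Suc 2" .
  qed simp
  ultimately have arg: "root 4 x * ln x / 100 \<le> real d * (1/2)" by (simp add: mult.commute)
  have "exp (root 4 x * ln x / 100) \<le> exp (real d * (1/2))" using arg by simp
  also have "\<dots> = exp (1/2) ^ d" by (rule exp_of_nat_mult)
  also have "\<dots> \<le> 2 ^ d" by (rule power_mono[OF exp_half_le2]) simp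
  finally have "exp (root 4 x * ln x / 100) \<le> 2 ^ d" .
  moreover obtain m where m: "d = Suc (Suc m)" using assms by (metis add_2_eq_Suc le_Suc_ex)
  ultimately show ?thesis unfolding x_def by simp
qed


definition FF :: "nat \<Rightarrow> nat \<Rightarrow> ennreal" where
  "FF d u = ennreal (gg d (from_nat u :: vtx))"

lemma other_cases:
  assumes "v \<in> Vv d" "v \<noteq> P 0" "v \<noteq> P d" "2 \<le> d"
  shows "finite {w. Ev d v w} \<and> {w. Ev d v w} \<noteq> {} \<and> {w. Ev d v w} \<subseteq> Vv d \<and>
         sum (gg d) {w. Ev d v w} / card {w. Ev d v w} \<le> gg d v"
proof -
  have sub: "{w. Ev d v w} \<subseteq> Vv d" using Ev_in by blast
  then have fin: "finite {w. Ev d v w}" using finite_Vv finite_subset by blast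
  from assms(1) consider i where "v = P i" "i \<le> d" | i j t where "v = H i j t"
    unfolding Vv_def by blast
  then show ?thesis
  proof cases
    case 1
    then have i: "1 \<le> i" "i < d" using assms by auto
    show ?thesis using N_P[OF assms(4) i] drift_P[OF assms(4) i] sub fin 1 by auto
  next
    case 2
    then show ?thesis using N_H drift_H assms(1) sub fin by auto
  qed
qed

lemma step_facts:
  assumes d: "2 \<le> d" and geo: "geodesic_choice (Vn d) (En d) (to_nat (P 0)) nx" and x: "x \<in> Vn d"
  shows "set_pmf (gb_step (En d) (to_nat (P 0)) {to_nat (P d)} nx x) \<subseteq> Vn d \<and>
    (\<integral>\<^sup>+y. FF d y \<partial>measure_pmf (gb_step (En d) (to_nat (P 0)) {to_nat (P d)} nx x))
       \<le> FF d x + ennreal ((1/2)^(d-1))"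
proof -
  obtain v where v: "x = to_nat v" "v \<in> Vv d" using x by (auto simp: Vn_def)
  have P0: "P 0 \<in> Vv d" and Pd1: "P (d-1) \<in> Vv d" by (auto simp: Vv_def)
  consider "v = P 0" | "v = P d" | "v \<noteq> P 0" "v \<noteq> P d" by blast
  then show ?thesis
  proof cases
    case 1
    then have st: "gb_step (En d) (to_nat (P 0)) {to_nat (P d)} nx x = return_pmf x"
      using v by (simp add: gb_step_def)
    show ?thesis unfolding st using x by (simp add: add_increasing2)
  next
    case 2
    then have ne: "x \<noteq> to_nat (P 0)" using v d by simp
    have st: "gb_step (En d) (to_nat (P 0)) {to_nat (P d)} nx x = return_pmf (to_nat (P (d-1)))"
      using v 2 ne geo_nx[OF d geo] by (simp add: gb_step_def)
    have "FF d x = 0" using v 2 by (simp add: FF_def)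
    moreover have "FF d (to_nat (P (d-1))) = ennreal ((1/2)^(d-1))" using d by (simp add: FF_def)
    ultimately show ?thesis unfolding st using Pd1 by (simp add: Vn_def)
  next
    case 3
    have ne: "x \<noteq> to_nat (P 0)" "x \<notin> {to_nat (P d)}" using v 3 by auto
    note oc = other_cases[OF v(2) 3 d]
    have N: "{y. En d x y} = to_nat ` {w. Ev d v w}" using v N_n by simp
    have st: "gb_step (En d) (to_nat (P 0)) {to_nat (P d)} nx x = pmf_of_set (to_nat ` {w. Ev d v w})"
      using ne N by (simp add: gb_step_def)
    have fin: "finite (to_nat ` {w. Ev d v w})" "to_nat ` {w. Ev d v w} \<noteq> {}" using oc by auto
    have set: "set_pmf (pmf_of_set (to_nat ` {w. Ev d v w})) \<subseteq> Vn d"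
      using fin oc by (auto simp: Vn_def)
    have nn: "\<And>y. y \<in> to_nat ` {w. Ev d v w} \<Longrightarrow> 0 \<le> gg d (from_nat y :: vtx)"
      using oc gg_nonneg by auto
    have "(\<integral>\<^sup>+y. FF d y \<partial>measure_pmf (pmf_of_set (to_nat ` {w. Ev d v w})))
        = ennreal (sum (\<lambda>y. gg d (from_nat y :: vtx)) (to_nat ` {w. Ev d v w}) / card (to_nat ` {w. Ev d v w}))"
      unfolding FF_def by (rule nn_pmf_set[OF fin nn])
    also have "\<dots> = ennreal (sum (gg d) {w. Ev d v w} / card {w. Ev d v w})"
      by (simp add: sum.reindex card_image)
    also have "\<dots> \<le> ennreal (gg d v)" using oc by (simp add: ennreal_leI)
    also have "\<dots> = FF d x" using v by (simp add: FF_def)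
    also have "\<dots> \<le> FF d x + ennreal ((1/2)^(d-1))" by (simp add: add_increasing2)
    finally show ?thesis unfolding st using set by simp
  qed
qed


lemma hit_bound:
  assumes d: "2 \<le> d" and geo: "geodesic_choice (Vn d) (En d) (to_nat (P 0)) nx"
  shows "ennreal (2^(d-2) / 2) \<le> expected_hitting_time (En d) (to_nat (P 0)) {to_nat (P d)} nx (to_nat (P d))"
proof -
  obtain m where m: "d = Suc (Suc m)" using d by (metis add_2_eq_Suc le_Suc_ex)
  have aV: "to_nat (P d) \<in> Vn d" and bV: "to_nat (P 0) \<in> Vn d" by (auto simp: Vn_def Vv_def)
  note sf = step_facts[OF d geo]
  have Fb: "FF d (to_nat (P 0)) \<ge> 1" using d by (simp add: FF_def)
  have Fa: "FF d (to_nat (P d)) = 0" by (simp add: FF_def)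
  let ?g = "\<lambda>k. ennreal (measure_pmf.prob (gb_walk (En d) (to_nat (P 0)) {to_nat (P d)} nx (to_nat (P d)) k) {x. x \<noteq> to_nat (P 0)})"
  have trm: "?g k \<ge> ennreal (1/2)" if k: "k < 2^m" for k
  proof -
    have A: "?g k \<ge> 1 - (FF d (to_nat (P d)) + of_nat k * ennreal ((1/2)^(d-1)))"
      by (rule walk_notb[OF aV bV]) (use sf Fb in auto)
    have B: "1 - (FF d (to_nat (P d)) + of_nat k * ennreal ((1/2)^(d-1))) = ennreal (1 - real k * (1/2)^(d-1))"
      unfolding Fa by (simp add: ennreal_of_nat_eq_real_of_nat ennreal_mult'' ennreal_minus[symmetric])
    have C: "ennreal (1 - real k * (1/2)^(d-1)) \<ge> ennreal (1/2)"
    proof (rule ennreal_leI)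
      have "real k \<le> 2^m" using k by (metis less_imp_le of_nat_le_iff of_nat_numeral of_nat_power)
      then have "real k * (1/2)^(Suc m) \<le> 2^m * (1/2)^(Suc m)" by (rule mult_right_mono) simp
      then have "real k * (1/2)^(d-1) \<le> 2^m * (1/2)^(Suc m)" unfolding m by simp
      also have "2^m * (1/2)^(Suc m) = (1/2::real)" by (simp add: power_one_over)
      finally show "1/2 \<le> 1 - real k * (1/2)^(d-1)" by simp
    qed
    show ?thesis by (rule order_trans[OF C A[unfolded B]])
  qed
  have "(\<Sum>k<(2::nat)^m. ennreal (1/2)) = of_nat (2^m) * ennreal (1/2)" by simp
  also have "\<dots> = ennreal (real (2^m) * (1/2))"
    by (subst ennreal_of_nat_eq_real_of_nat, subst ennreal_mult'') auto
  finally have "ennreal (2^(d-2) / 2) = (\<Sum>k<(2::nat)^m. ennreal (1/2))"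
    unfolding m by simp
  also have "\<dots> \<le> (\<Sum>k<(2::nat)^m. ?g k)" by (rule sum_mono) (use trm in auto)
  also have "\<dots> \<le> (\<Sum>k. ?g k)" by (rule sum_le_suminf) auto
  also have "\<dots> = expected_hitting_time (En d) (to_nat (P 0)) {to_nat (P d)} nx (to_nat (P d))"
    by (simp add: expected_hitting_time_def)
  finally show ?thesis .
qed

theorem theorem1p1:
  shows "\<exists>c::real. c > 0 \<and> infinite {n::nat. \<exists>(V::nat set) E a b.
            graph V E \<and> connected_graph V E \<and> card V = n \<and> a \<in> V \<and> b \<in> V \<and>
            (\<forall>nx. geodesic_choice V E b nx \<longrightarrow>
               ennreal (c * exp (root 4 (real n) * ln (real n) / 100))
                 \<le> expected_hitting_time E b {a} nx a)}"
proof (intro exI conjI)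
  let ?S = "{n::nat. \<exists>(V::nat set) E a b.
            graph V E \<and> connected_graph V E \<and> card V = n \<and> a \<in> V \<and> b \<in> V \<and>
            (\<forall>nx. geodesic_choice V E b nx \<longrightarrow>
               ennreal ((1/8) * exp (root 4 (real n) * ln (real n) / 100))
                 \<le> expected_hitting_time E b {a} nx a)}"
  show "(0::real) < 1/8" by simp
  have mem: "nf d \<in> ?S" if d: "2 \<le> d" for d
  proof -
    have aV: "to_nat (P d) \<in> Vn d" and bV: "to_nat (P 0) \<in> Vn d" by (auto simp: Vn_def Vv_def)
    have "\<forall>nx. geodesic_choice (Vn d) (En d) (to_nat (P 0)) nx \<longrightarrow>
          ennreal ((1/8) * exp (root 4 (real (nf d)) * ln (real (nf d)) / 100))
                 \<le> expected_hitting_time (En d) (to_nat (P 0)) {to_nat (P d)} nx (to_nat (P d))"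
    proof (intro allI impI)
      fix nx assume geo: "geodesic_choice (Vn d) (En d) (to_nat (P 0)) nx"
      have "ennreal ((1/8) * exp (root 4 (real (nf d)) * ln (real (nf d)) / 100)) \<le> ennreal (2^(d-2)/2)"
        by (rule ennreal_leI) (rule asym[OF d])
      also have "\<dots> \<le> expected_hitting_time (En d) (to_nat (P 0)) {to_nat (P d)} nx (to_nat (P d))"
        by (rule hit_bound[OF d geo])
      finally show "ennreal ((1/8) * exp (root 4 (real (nf d)) * ln (real (nf d)) / 100))
                 \<le> expected_hitting_time (En d) (to_nat (P 0)) {to_nat (P d)} nx (to_nat (P d))" .
    qed
    moreover have "card (Vn d) = nf d" by (simp add: card_n nf_def)
    ultimately show ?thesis using graph_n conn_n aV bV by blast
  qed
  have mono: "nf d < nf d'" if "d < d'" for d d'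
  proof -
    have "(d - 1) * (2*d) * (d - 1) \<le> (d' - 1) * (2*d') * (d' - 1)"
      using that by (intro mult_le_mono) auto
    then show ?thesis using that by (simp add: nf_def)
  qed
  have inj: "inj_on nf {2..}"
    by (rule inj_onI) (metis mono nat_neq_iff)
  have "nf ` {2..} \<subseteq> ?S" using mem by auto
  moreover have "infinite (nf ` {2..})"
    using inj finite_imageD infinite_Ici by blast
  ultimately show "infinite ?S" using finite_subset by blast
qed


end
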